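(* Let $A$ be an $\mathbb{R}$-algebra which is an integral domain whose fraction field is real, and let $B$ be an $A$-algebra (with structure morphism $\iota:A\to B$) which has the substitution property over $A$. Then $\iota:A\to B$ is injective.
   Context: A field $F$ is real if $-1$ is not a sum of squares in $F$ (equivalently $(0)$ is a real ideal of $F$: $a_1^2+\cdots+a_k^2=0$ implies all $a_i=0$). Substitution property: $B$ has the substitution property over $A$ if for every real closed field $R$ and every ring homomorphism $\phi:A\to R$ there exists one and only one ring homomorphism $\psi:B\to R$ with $\psi\circ\iota=\phi$. *)

theory Defs
  imports Complex_Main "HOL-Computational_Algebra.Fraction_Field" "HOL-Algebra.Ring"
begin

definition real_field_type :: "'k::field itself \<Rightarrow> bool" where
  "real_field_type TYPE('k) \<longleftrightarrow>
     \<not> (\<exists>(n::nat) (f::nat \<Rightarrow> 'k). (\<Sum>i<n. f i ^ 2) = - 1)"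

definition tc_ring_hom :: "('a::comm_ring_1 \<Rightarrow> 'b::comm_ring_1) \<Rightarrow> bool" where
  "tc_ring_hom f \<longleftrightarrow> f 1 = 1 \<and> (\<forall>x y. f (x + y) = f x + f y) \<and> (\<forall>x y. f (x * y) = f x * f y)"

definition ring_hom_into :: "('a::comm_ring_1 \<Rightarrow> 'r) \<Rightarrow> ('r, 'm) ring_scheme \<Rightarrow> bool" where
  "ring_hom_into f R \<longleftrightarrow> (\<forall>x. f x \<in> carrier R) \<and> f 1 = \<one>\<^bsub>R\<^esub>
     \<and> (\<forall>x y. f (x + y) = f x \<oplus>\<^bsub>R\<^esub> f y) \<and> (\<forall>x y. f (x * y) = f x \<otimes>\<^bsub>R\<^esub> f y)"

definition real_field :: "('r, 'm) ring_scheme \<Rightarrow> bool" where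
  "real_field R \<longleftrightarrow> field R \<and>
     \<not> (\<exists>(n::nat) f. f ` {..<n} \<subseteq> carrier R \<and>
          finsum R (\<lambda>i. f i \<otimes>\<^bsub>R\<^esub> f i) {..<n} = \<ominus>\<^bsub>R\<^esub> \<one>\<^bsub>R\<^esub>)"

definition real_closed_field :: "('r, 'm) ring_scheme \<Rightarrow> bool" where
  "real_closed_field R \<longleftrightarrow> real_field R \<and>
     (\<forall>a\<in>carrier R. \<exists>b\<in>carrier R. a = b \<otimes>\<^bsub>R\<^esub> b \<or> \<ominus>\<^bsub>R\<^esub> a = b \<otimes>\<^bsub>R\<^esub> b) \<and>
     (\<forall>(n::nat) c. odd n \<longrightarrow> c ` {..n} \<subseteq> carrier R \<longrightarrow> c n \<noteq> \<zero>\<^bsub>R\<^esub> \<longrightarrow>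
        (\<exists>x\<in>carrier R. finsum R (\<lambda>i. c i \<otimes>\<^bsub>R\<^esub> x [^]\<^bsub>R\<^esub> i) {..n} = \<zero>\<^bsub>R\<^esub>))"

definition substitution_property ::
  "'r itself \<Rightarrow> ('a::comm_ring_1 \<Rightarrow> 'b::comm_ring_1) \<Rightarrow> bool" where
  "substitution_property TYPE('r) \<iota> \<longleftrightarrow>
     (\<forall>R :: 'r ring. real_closed_field R \<longrightarrow>
        (\<forall>\<phi> :: 'a \<Rightarrow> 'r. ring_hom_into \<phi> R \<longrightarrow>
           (\<exists>!\<psi> :: 'b \<Rightarrow> 'r. ring_hom_into \<psi> R \<and> \<psi> \<circ> \<iota> = \<phi>)))"

end

theory Submission
  imports Defs "HOL-Algebra.Algebraic_Closure_Type" "HOL-Algebra.Weak_Morphisms"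
begin

definition sfield :: "'c::field set \<Rightarrow> bool" where
  "sfield R \<longleftrightarrow> 0 \<in> R \<and> 1 \<in> R \<and> (\<forall>x\<in>R. \<forall>y\<in>R. x + y \<in> R \<and> x * y \<in> R)
     \<and> (\<forall>x\<in>R. - x \<in> R \<and> inverse x \<in> R)"

lemma sfieldD:
  assumes "sfield R"
  shows "0 \<in> R" "1 \<in> R" "x \<in> R \<Longrightarrow> y \<in> R \<Longrightarrow> x + y \<in> R"
    "x \<in> R \<Longrightarrow> y \<in> R \<Longrightarrow> x * y \<in> R" "x \<in> R \<Longrightarrow> - x \<in> R"
    "x \<in> R \<Longrightarrow> inverse x \<in> R"
  using assms unfolding sfield_def by blast+

lemma sfieldD2:
  assumes "sfield R"
  shows "x \<in> R \<Longrightarrow> y \<in> R \<Longrightarrow> x - y \<in> R"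
    "x \<in> R \<Longrightarrow> y \<in> R \<Longrightarrow> x / y \<in> R"
proof -
  show "x \<in> R \<Longrightarrow> y \<in> R \<Longrightarrow> x - y \<in> R"
    using sfieldD(3)[OF assms, of x "-y"] sfieldD(5)[OF assms, of y] by (metis diff_conv_add_uminus)
  show "x \<in> R \<Longrightarrow> y \<in> R \<Longrightarrow> x / y \<in> R"
    using sfieldD(4)[OF assms, of x "inverse y"] sfieldD(6)[OF assms, of y] by (metis divide_inverse)
qed

lemma sfield_sum: "sfield R \<Longrightarrow> (\<And>i. i \<in> A \<Longrightarrow> f i \<in> R) \<Longrightarrow> sum f A \<in> R"
  by (induction A rule: infinite_finite_induct) (simp_all add: sfieldD)

lemma sfield_power: "sfield R \<Longrightarrow> x \<in> R \<Longrightarrow> x ^ n \<in> R"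
  by (induction n) (simp_all add: sfieldD)

inductive_set sos :: "'c::field set \<Rightarrow> 'c set" for R where
  sos0: "0 \<in> sos R"
| sosS: "a \<in> R \<Longrightarrow> s \<in> sos R \<Longrightarrow> a * a + s \<in> sos R"

lemma sos_subset: "s \<in> sos R \<Longrightarrow> sfield R \<Longrightarrow> s \<in> R"
  by (induction rule: sos.induct) (simp_all add: sfieldD)

lemma sos_sq: "a \<in> R \<Longrightarrow> a * a \<in> sos R"
  using sosS[OF _ sos0] by fastforce

lemma sos_add: "s \<in> sos R \<Longrightarrow> t \<in> sos R \<Longrightarrow> s + t \<in> sos R"
  by (induction rule: sos.induct) (simp_all add: add.assoc sosS)

lemma sos_mult_sq: "t \<in> sos R \<Longrightarrow> sfield R \<Longrightarrow> a \<in> R \<Longrightarrow> a * a * t \<in> sos R"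
proof (induction rule: sos.induct)
  case sos0 then show ?case by (simp add: sos.sos0)
next
  case (sosS b s)
  have "a * a * (b * b + s) = (a * b) * (a * b) + a * a * s" by (simp add: algebra_simps)
  then show ?case using sosS(1,3-5) sos.sosS sfieldD(4) by metis
qed

lemma sos_mult: "s \<in> sos R \<Longrightarrow> sfield R \<Longrightarrow> t \<in> sos R \<Longrightarrow> s * t \<in> sos R"
proof (induction rule: sos.induct)
  case sos0 then show ?case by (simp add: sos.sos0)
next
  case (sosS b s)
  have "(b * b + s) * t = b * b * t + s * t" by (simp add: algebra_simps)
  then show ?case using sosS sos_mult_sq sos_add by metis
qed

lemma sos_inverse: "sfield R \<Longrightarrow> s \<in> sos R \<Longrightarrow> inverse s \<in> sos R"
proof -
  assume R: "sfield R" and s: "s \<in> sos R"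
  show ?thesis
  proof (cases "s = 0")
    case True then show ?thesis using s by simp
  next
    case False
    have "inverse s = inverse s * inverse s * s" using False by (simp add: field_simps)
    then show ?thesis using sos_mult_sq[OF s R, of "inverse s"] R s sos_subset sfieldD(6) by metis
  qed
qed

lemma sos_one: "sfield R \<Longrightarrow> 1 \<in> sos R"
  using sos_sq[of 1 R] sfieldD(2) by fastforce

lemma sos_mono: "s \<in> sos R \<Longrightarrow> R \<subseteq> S \<Longrightarrow> s \<in> sos S"
  by (induction rule: sos.induct) (simp_all add: sos.intros subset_iff)

definition realset :: "'c::field set \<Rightarrow> bool" where
  "realset R \<longleftrightarrow> - 1 \<notin> sos R"

lemma sos_pos:
  assumes R: "sfield R" "realset R" and s: "s \<in> sos R" "s \<noteq> 0" and t: "t \<in> sos R"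
  shows "s + t \<noteq> 0"
proof
  assume "s + t = 0"
  then have "t = - s" by (metis neg_eq_iff_add_eq_0)
  then have "-1 = t * inverse s" using s by simp
  also have "\<dots> \<in> sos R" using sos_mult[OF t R(1) sos_inverse[OF R(1) s(1)]] .
  finally show False using R(2) unfolding realset_def by simp
qed

lemma sos_sum_eq: "sfield R \<Longrightarrow> (\<And>i. i < n \<Longrightarrow> f i \<in> R) \<Longrightarrow> (\<Sum>i<(n::nat). f i * f i) \<in> sos R"
  by (induction n) (simp_all add: sos.sos0 sos_add sos_sq)


definition realext :: "'c::field set \<Rightarrow> 'c set set" where
  "realext K0 = {R. sfield R \<and> K0 \<subseteq> R \<and> realset R}"

lemma sos_Union_chain:
  assumes "s \<in> sos (\<Union>C)" "C \<noteq> {}" "\<forall>M\<in>C. \<forall>N\<in>C. M \<subseteq> N \<or> N \<subseteq> M"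
  shows "\<exists>M\<in>C. s \<in> sos M"
  using assms
proof (induction rule: sos.induct)
  case sos0
  then show ?case using sos.sos0 by blast
next
  case (sosS a s)
  then obtain M1 where M1: "M1 \<in> C" "a \<in> M1" by blast
  from sosS obtain M2 where M2: "M2 \<in> C" "s \<in> sos M2" by blast
  show ?case
  proof (cases "M1 \<subseteq> M2")
    case True
    then show ?thesis using M1 M2 sos.sosS by blast
  next
    case False
    then have "M2 \<subseteq> M1" using sosS(5) M1 M2 by blast
    then have "s \<in> sos M1" using M2 sos_mono by blast
    then show ?thesis using M1 sos.sosS by blast
  qed
qed

lemma exists_maximal_real:
  assumes "sfield K0" "realset K0"
  shows "\<exists>R\<in>realext K0. \<forall>S\<in>realext K0. R \<subseteq> S \<longrightarrow> S = R"
proof (rule subset_Zorn_nonempty)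
  show "realext K0 \<noteq> {}" using assms unfolding realext_def by blast
next
  fix C assume C: "C \<noteq> {}" "subset.chain (realext K0) C"
  then have CC: "C \<subseteq> realext K0" "\<forall>M\<in>C. \<forall>N\<in>C. M \<subseteq> N \<or> N \<subseteq> M"
    unfolding subset.chain_def by auto
  have two: "\<exists>W\<in>C. x \<in> W \<and> y \<in> W" if "x \<in> \<Union>C" "y \<in> \<Union>C" for x y
  proof -
    from that obtain M N where "M \<in> C" "N \<in> C" "x \<in> M" "y \<in> N" by blast
    then show ?thesis using CC(2) by blast
  qed
  have sf: "sfield M" if "M \<in> C" for M using that CC(1) unfolding realext_def by blast
  have "sfield (\<Union>C)"
    unfolding sfield_def
  proof (intro conjI ballI)
    show "0 \<in> \<Union>C" using C(1) sf sfieldD(1) by blast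
    show "1 \<in> \<Union>C" using C(1) sf sfieldD(2) by blast
    fix x assume x: "x \<in> \<Union>C"
    then obtain M where M: "M \<in> C" "x \<in> M" by blast
    show "- x \<in> \<Union>C" using M sf sfieldD(5) by blast
    show "inverse x \<in> \<Union>C" using M sf sfieldD(6) by blast
    fix y assume y: "y \<in> \<Union>C"
    obtain W where W: "W \<in> C" "x \<in> W" "y \<in> W" using two[OF x y] by blast
    show "x + y \<in> \<Union>C" using W sf sfieldD(3) by blast
    show "x * y \<in> \<Union>C" using W sf sfieldD(4) by blast
  qed
  moreover have "K0 \<subseteq> \<Union>C" using C(1) CC(1) unfolding realext_def by blast
  moreover have "realset (\<Union>C)"
    unfolding realset_def
  proof
    assume "- 1 \<in> sos (\<Union>C)"
    then obtain M where "M \<in> C" "- 1 \<in> sos M" using sos_Union_chain C(1) CC(2) by blast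
    then show False using CC(1) unfolding realext_def realset_def by blast
  qed
  ultimately show "\<Union>C \<in> realext K0" unfolding realext_def by blast
qed

definition maxreal :: "'c::field set \<Rightarrow> 'c set \<Rightarrow> bool" where
  "maxreal K0 R \<longleftrightarrow> R \<in> realext K0 \<and> (\<forall>S\<in>realext K0. R \<subseteq> S \<longrightarrow> S = R)"

lemma maxreal_ext:
  assumes "maxreal K0 R" "sfield S" "R \<subseteq> S" "S \<noteq> R"
  shows "- 1 \<in> sos S"
  using assms unfolding maxreal_def realext_def realset_def by blast

lemma maxreal_props:
  assumes "maxreal K0 R"
  shows "sfield R" "realset R" "K0 \<subseteq> R"
  using assms unfolding maxreal_def realext_def by blast+


lemma sqrt_exists: "\<exists>y::'c::alg_closed_field. y * y = x"
proof -
  have "degree [:-x, 0, 1:] = 2" by simp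
  then obtain y where "poly [:-x, 0, 1:] y = 0" using alg_closed_imp_poly_has_root[of "[:-x, 0, 1:]"] by auto
  then have "y * y = x" by (simp add: algebra_simps)
  then show ?thesis by blast
qed

lemma sq_ext_sfield:
  fixes R :: "'c::field set"
  assumes R: "sfield R" and x: "x \<in> R" and y: "y * y = x" "y \<notin> R"
  shows "sfield {a + b * y |a b. a \<in> R \<and> b \<in> R}" (is "sfield ?S")
  unfolding sfield_def
proof (intro conjI ballI)
  note D = sfieldD[OF R] sfieldD2[OF R]
  have mem: "v \<in> ?S" if "a \<in> R" "b \<in> R" "v = a + b * y" for a b v using that by blast
  have "(0::'c) = 0 + 0 * y" by simp
  then show "0 \<in> ?S" using D(1) by blast
  have "(1::'c) = 1 + 0 * y" by simp
  then show "1 \<in> ?S" using D(1,2) by blast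
  fix z assume "z \<in> ?S"
  then obtain a b where z: "z = a + b * y" "a \<in> R" "b \<in> R" by blast
  show "- z \<in> ?S"
  proof -
    have "- z = (-a) + (-b) * y" using z by simp
    then show ?thesis using mem[OF D(5)[OF z(2)] D(5)[OF z(3)]] by blast
  qed
  show "inverse z \<in> ?S"
  proof (cases "z = 0")
    case True
    then show ?thesis using \<open>0 \<in> ?S\<close> by simp
  next
    case False
    define N where "N = a * a - b * b * x"
    have NR: "N \<in> R" unfolding N_def using D(7)[OF D(4)[OF z(2) z(2)] D(4)[OF D(4)[OF z(3) z(3)] x]] .
    have zN: "z * (a - b * y) = N" unfolding N_def z(1)
      by (simp add: algebra_simps flip: y(1))
    have "N \<noteq> 0"
    proof
      assume "N = 0"
      then have "a - b * y = 0" using zN False by simp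
      show False
      proof (cases "b = 0")
        case True
        then show False using \<open>a - b * y = 0\<close> z False by simp
      next
        case bnz: False
        then have "y = a / b" using \<open>a - b * y = 0\<close> by (simp add: field_simps)
        then show False using y(2) D(8)[OF z(2) z(3)] by simp
      qed
    qed
    have "inverse z = (a - b * y) / N" using zN \<open>N \<noteq> 0\<close> False
      by (simp add: field_simps)
    also have "\<dots> = a / N + (- b / N) * y" using \<open>N \<noteq> 0\<close> by (simp add: field_simps)
    finally show ?thesis using mem[OF D(8)[OF z(2) NR] D(8)[OF D(5)[OF z(3)] NR]] by blast
  qed
  fix w assume "w \<in> ?S"
  then obtain c d where w: "w = c + d * y" "c \<in> R" "d \<in> R" by blast
  have "z + w = (a + c) + (b + d) * y" using z w by (simp add: algebra_simps)
  then show "z + w \<in> ?S" using mem[OF D(3)[OF z(2) w(2)] D(3)[OF z(3) w(3)]] by blast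
  have "z * w = (a * c + b * d * x) + (a * d + b * c) * y" using z w
    by (simp add: algebra_simps flip: y(1))
  then show "z * w \<in> ?S"
    using mem[OF D(3)[OF D(4)[OF z(2) w(2)] D(4)[OF D(4)[OF z(3) w(3)] x]] D(3)[OF D(4)[OF z(2) w(3)] D(4)[OF z(3) w(2)]]] by blast
qed

lemma sq_ext_sos:
  fixes R :: "'c::field set"
  assumes "w \<in> sos {a + b * y |a b. a \<in> R \<and> b \<in> R}" and R: "sfield R" and x: "x \<in> R" and y: "y * y = x"
  shows "\<exists>A B C. A \<in> sos R \<and> B \<in> sos R \<and> C \<in> R \<and> w = A + x * B + y * C"
  using assms(1)
proof (induction rule: sos.induct)
  case sos0
  then show ?case using sos.sos0 sfieldD(1)[OF R] by (intro exI[of _ 0]) auto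
next
  case (sosS z s)
  then obtain a b where z: "z = a + b * y" "a \<in> R" "b \<in> R" by blast
  from sosS obtain A B C where ABC: "A \<in> sos R" "B \<in> sos R" "C \<in> R" "s = A + x * B + y * C" by blast
  have "z * z + s = (a * a + A) + x * (b * b + B) + y * (a * b + a * b + C)"
    using z ABC(4) by (simp add: algebra_simps flip: y)
  moreover have "a * a + A \<in> sos R" "b * b + B \<in> sos R" using z ABC sos.sosS by blast+
  moreover have "a * b + a * b + C \<in> R"
  proof -
    have ab: "a * b \<in> R" using sfieldD(4)[OF R z(2) z(3)] .
    show ?thesis using sfieldD(3)[OF R sfieldD(3)[OF R ab ab] ABC(3)] .
  qed
  ultimately show ?case by blast
qed

lemma maxreal_neg_sos:
  fixes R :: "'c::alg_closed_field set"
  assumes M: "maxreal K0 R" and x: "x \<in> R" and nsq: "\<not> (\<exists>b\<in>R. x = b * b)"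
  shows "- x \<in> sos R"
proof -
  note R = maxreal_props[OF M]
  obtain y where y: "y * y = x" using sqrt_exists by blast
  have yR: "y \<notin> R" using nsq y by blast
  define S where "S = {a + b * y |a b. a \<in> R \<and> b \<in> R}"
  have S: "sfield S" unfolding S_def using sq_ext_sfield[OF R(1) x y yR] .
  have RS: "R \<subseteq> S" unfolding S_def
  proof
    fix r assume "r \<in> R"
    then have "r = r + 0 * y" "0 \<in> R" using sfieldD(1)[OF R(1)] by auto
    then show "r \<in> {a + b * y |a b. a \<in> R \<and> b \<in> R}" using \<open>r \<in> R\<close> by blast
  qed
  have "y \<in> S" unfolding S_def using sfieldD(1,2)[OF R(1)] by (intro CollectI exI[of _ 0] exI[of _ 1]) auto
  then have "S \<noteq> R" using yR by blast
  then have "- 1 \<in> sos S" using maxreal_ext[OF M S RS] by blast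
  then obtain A B C where ABC: "A \<in> sos R" "B \<in> sos R" "C \<in> R" "- 1 = A + x * B + y * C"
    using sq_ext_sos[OF _ R(1) x y] unfolding S_def by blast
  have C0: "C = 0"
  proof (rule ccontr)
    assume "C \<noteq> 0"
    then have "y = (- 1 - A - x * B) / C" using ABC(4) by (simp add: field_simps)
    moreover have "(- 1 - A - x * B) / C \<in> R"
      using sos_subset[OF ABC(1) R(1)] sos_subset[OF ABC(2) R(1)] ABC(3) x sfieldD[OF R(1)] sfieldD2[OF R(1)]
      by simp
    ultimately show False using yR by simp
  qed
  have B0: "B \<noteq> 0"
  proof
    assume "B = 0"
    then have "- 1 = A" using ABC(4) C0 by simp
    then show False using ABC(1) R(2) unfolding realset_def by simp
  qed
  have "- 1 = A + x * B" using ABC(4) C0 by simp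
  then have "x * B = - 1 - A" by (metis add_diff_cancel_left')
  then have "- x * B = 1 + A" by (metis minus_diff_eq minus_minus mult_minus_left diff_minus_eq_add add.commute)
  then have "- x = (1 + A) * (inverse B * inverse B) * B" using B0 by (simp add: field_simps)
  also have "\<dots> \<in> sos R"
  proof -
    have "1 + A \<in> sos R" using sos_add[OF sos_one[OF R(1)] ABC(1)] .
    moreover have "inverse B * inverse B \<in> sos R"
      using sos_sq[of "inverse B"] sfieldD(6)[OF R(1) sos_subset[OF ABC(2) R(1)]] by blast
    ultimately show ?thesis using sos_mult R(1) ABC(2) by blast
  qed
  finally show ?thesis .
qed

lemma maxreal_square:
  fixes R :: "'c::alg_closed_field set"
  assumes M: "maxreal K0 R" and x: "x \<in> R"
  shows "\<exists>b\<in>R. x = b * b \<or> - x = b * b"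
proof (rule ccontr)
  assume nn: "\<not> ?thesis"
  note R = maxreal_props[OF M]
  have n1: "\<not> (\<exists>b\<in>R. x = b * b)" using nn by blast
  have n2: "\<not> (\<exists>b\<in>R. - x = b * b)" using nn by blast
  have s1: "- x \<in> sos R" using maxreal_neg_sos[OF M x n1] .
  have s2: "- (- x) \<in> sos R" using maxreal_neg_sos[OF M sfieldD(5)[OF R(1) x] n2] .
  have "x \<noteq> 0"
  proof
    assume "x = 0"
    then have "x = 0 * 0" by simp
    then show False using n1 sfieldD(1)[OF R(1)] by blast
  qed
  have "(- x) * (- (- x)) * (inverse x * inverse x) \<in> sos R"
    using sos_mult[OF sos_mult[OF s1 R(1) s2] R(1) sos_sq[OF sfieldD(6)[OF R(1) x]]] .
  moreover have "(- x) * (- (- x)) * (inverse x * inverse x) = - 1" using \<open>x \<noteq> 0\<close>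
    by (simp add: field_simps)
  ultimately show False using R(2) unfolding realset_def by simp
qed

definition Rpoly :: "'c::field set \<Rightarrow> 'c poly \<Rightarrow> bool" where
  "Rpoly R p \<longleftrightarrow> (\<forall>i. coeff p i \<in> R)"

lemma Rpoly_0: "sfield R \<Longrightarrow> Rpoly R 0"
  unfolding Rpoly_def using sfieldD(1) by simp

lemma Rpoly_const: assumes R: "sfield R" and c: "c \<in> R" shows "Rpoly R [:c:]"
  unfolding Rpoly_def using sfieldD(1)[OF R] c by (simp add: coeff_pCons split: nat.split)

lemma Rpoly_1: assumes R: "sfield R" shows "Rpoly R 1"
  using Rpoly_const[OF R sfieldD(2)[OF R]] by (simp add: one_pCons)

lemma Rpoly_add: assumes R: "sfield R" shows "Rpoly R p \<Longrightarrow> Rpoly R q \<Longrightarrow> Rpoly R (p + q)"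
  unfolding Rpoly_def using sfieldD(3)[OF R] by simp

lemma Rpoly_uminus: assumes R: "sfield R" shows "Rpoly R p \<Longrightarrow> Rpoly R (- p)"
  unfolding Rpoly_def using sfieldD(5)[OF R] by simp

lemma Rpoly_diff: assumes R: "sfield R" shows "Rpoly R p \<Longrightarrow> Rpoly R q \<Longrightarrow> Rpoly R (p - q)"
  unfolding Rpoly_def using sfieldD2(1)[OF R] by simp

lemma Rpoly_mult: assumes R: "sfield R" shows "Rpoly R p \<Longrightarrow> Rpoly R q \<Longrightarrow> Rpoly R (p * q)"
  unfolding Rpoly_def coeff_mult
  by (intro allI sfield_sum[OF R]) (simp_all add: sfieldD(4)[OF R])

lemma Rpoly_monom: assumes R: "sfield R" and c: "c \<in> R" shows "Rpoly R (monom c n)"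
  unfolding Rpoly_def using sfieldD(1)[OF R] c by (simp add: coeff_monom)

lemma Rpoly_poly: assumes R: "sfield R" shows "Rpoly R p \<Longrightarrow> x \<in> R \<Longrightarrow> poly p x \<in> R"
  unfolding poly_altdef Rpoly_def
  by (intro sfield_sum[OF R]) (simp_all add: sfieldD(4)[OF R] sfield_power[OF R])

lemma Rpoly_coeff: "Rpoly R p \<Longrightarrow> coeff p i \<in> R"
  unfolding Rpoly_def by blast

lemma Rpoly_ex_divmod:
  assumes R: "sfield R" and g: "Rpoly R g" "g \<noteq> 0"
  shows "Rpoly R p \<Longrightarrow> \<exists>q r. Rpoly R q \<and> Rpoly R r \<and> p = q * g + r \<and> (r = 0 \<or> degree r < degree g)"
proof (induction "degree p" arbitrary: p rule: less_induct)
  case less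
  show ?case
  proof (cases "p = 0 \<or> degree p < degree g")
    case True
    then show ?thesis using less.prems Rpoly_0[OF R] by (intro exI[of _ 0] exI[of _ p]) auto
  next
    case False
    then have p0: "p \<noteq> 0" and dg: "degree g \<le> degree p" by auto
    define k where "k = degree p - degree g"
    define c where "c = lead_coeff p / lead_coeff g"
    have cR: "c \<in> R" unfolding c_def using sfieldD2(2)[OF R Rpoly_coeff[OF less.prems] Rpoly_coeff[OF g(1)]] .
    have c0: "c \<noteq> 0" unfolding c_def using p0 g(2) by simp
    define p' where "p' = p - monom c k * g"
    have Rp': "Rpoly R p'" unfolding p'_def
      using Rpoly_diff[OF R less.prems Rpoly_mult[OF R Rpoly_monom[OF R cR] g(1)]] .
    have dm: "degree (monom c k * g) = degree p"
      using degree_mult_eq[of "monom c k" g] c0 g(2) dg by (simp add: degree_monom_eq k_def)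
    have cm: "coeff (monom c k * g) (degree p) = lead_coeff p"
      using dg g(2) by (simp add: coeff_monom_mult k_def c_def)
    have "degree p' \<le> degree p" unfolding p'_def using dm by (intro degree_diff_le) auto
    moreover have "coeff p' (degree p) = 0" unfolding p'_def using cm by simp
    ultimately have p'cases: "p' = 0 \<or> degree p' < degree p"
      by (metis le_neq_implies_less leading_coeff_0_iff)
    show ?thesis
    proof (cases "p' = 0")
      case True
      then have "p = monom c k * g + 0" unfolding p'_def by simp
      then show ?thesis using Rpoly_monom[OF R cR] Rpoly_0[OF R] by blast
    next
      case False
      then have "degree p' < degree p" using p'cases by simp
      from less.hyps[OF this Rp'] obtain q r where qr: "Rpoly R q" "Rpoly R r" "p' = q * g + r" "r = 0 \<or> degree r < degree g"
        by blast
      have "p = (q + monom c k) * g + r" using qr(3) unfolding p'_def by (simp add: algebra_simps)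
      then show ?thesis using qr Rpoly_add[OF R qr(1) Rpoly_monom[OF R cR]] by blast
    qed
  qed
qed

lemma Rpoly_divmod:
  assumes R: "sfield R" and p: "Rpoly R p" and g: "Rpoly R g"
  shows "Rpoly R (p div g)" "Rpoly R (p mod g)"
proof -
  have "Rpoly R (p div g) \<and> Rpoly R (p mod g)"
  proof (cases "g = 0")
    case True
    then show ?thesis using p Rpoly_0[OF R] by simp
  next
    case False
    obtain q r where qr: "Rpoly R q" "Rpoly R r" "p = q * g + r" "r = 0 \<or> degree r < degree g"
      using Rpoly_ex_divmod[OF R g False p] by blast
    have "(p div g, p mod g) = (q, r)"
    proof (induction rule: euclidean_relation_polyI)
      case by0
      then show ?case using False by simp
    next
      case divides
      have "g dvd r"
        using divides qr(3) by (metis add_diff_cancel_left' dvd_diff dvd_triv_right)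
      have "r = 0"
      proof (rule ccontr)
        assume "r \<noteq> 0"
        then have "degree g \<le> degree r" using dvd_imp_degree_le[OF \<open>g dvd r\<close>] by blast
        with qr(4) \<open>r \<noteq> 0\<close> show False by simp
      qed
      then show ?case using qr(3) by simp
    next
      case euclidean_relation
      then have "r \<noteq> 0" using qr(3) by auto
      then show ?case using qr by simp
    qed
    then show ?thesis using qr by simp
  qed
  then show "Rpoly R (p div g)" "Rpoly R (p mod g)" by blast+
qed

definition minpoly :: "'c::field set \<Rightarrow> 'c \<Rightarrow> 'c poly \<Rightarrow> bool" where
  "minpoly R \<alpha> \<mu> \<longleftrightarrow> Rpoly R \<mu> \<and> \<mu> \<noteq> 0 \<and> poly \<mu> \<alpha> = 0 \<and>
     (\<forall>q. Rpoly R q \<and> q \<noteq> 0 \<and> poly q \<alpha> = 0 \<longrightarrow> degree \<mu> \<le> degree q)"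

lemma minpoly_exists:
  assumes "Rpoly R p" "p \<noteq> 0" "poly p \<alpha> = 0"
  shows "\<exists>\<mu>. minpoly R \<alpha> \<mu>"
proof -
  let ?P = "\<lambda>q. Rpoly R q \<and> q \<noteq> 0 \<and> poly q \<alpha> = 0"
  obtain \<mu> where "?P \<mu>" "\<forall>q. ?P q \<longrightarrow> degree \<mu> \<le> degree q"
    using ex_has_least_nat[of ?P p degree] assms by blast
  then show ?thesis unfolding minpoly_def by blast
qed

lemma minpoly_deg_pos:
  assumes "minpoly R \<alpha> \<mu>"
  shows "0 < degree \<mu>"
proof (rule ccontr)
  assume "\<not> 0 < degree \<mu>"
  then have "degree \<mu> = 0" by simp
  then obtain c where "\<mu> = [:c:]" by (metis degree_eq_zeroE)
  then show False using assms unfolding minpoly_def by simp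
qed

lemma minpoly_dvd:
  assumes R: "sfield R" and mu: "minpoly R \<alpha> \<mu>" and q: "Rpoly R q" "poly q \<alpha> = 0"
  shows "q = (q div \<mu>) * \<mu>" "Rpoly R (q div \<mu>)"
proof -
  have mR: "Rpoly R \<mu>" "\<mu> \<noteq> 0" "poly \<mu> \<alpha> = 0" using mu unfolding minpoly_def by blast+
  have rR: "Rpoly R (q mod \<mu>)" using Rpoly_divmod[OF R q(1) mR(1)] by blast
  have "poly (q mod \<mu>) \<alpha> = 0"
  proof -
    have "q = (q div \<mu>) * \<mu> + q mod \<mu>" by simp
    then have "poly q \<alpha> = poly (q div \<mu>) \<alpha> * poly \<mu> \<alpha> + poly (q mod \<mu>) \<alpha>"
      by (metis poly_add poly_mult)
    then show ?thesis using q(2) mR(3) by simp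
  qed
  have "q mod \<mu> = 0"
  proof (rule ccontr)
    assume nz: "q mod \<mu> \<noteq> 0"
    then have "degree (q mod \<mu>) < degree \<mu>" using degree_mod_less'[OF mR(2)] by blast
    moreover have "degree \<mu> \<le> degree (q mod \<mu>)"
      using mu rR nz \<open>poly (q mod \<mu>) \<alpha> = 0\<close> unfolding minpoly_def by blast
    ultimately show False by simp
  qed
  then show "q = (q div \<mu>) * \<mu>" by (metis add.right_neutral div_mult_mod_eq)
  show "Rpoly R (q div \<mu>)" using Rpoly_divmod[OF R q(1) mR(1)] by blast
qed

lemma minpoly_reduce:
  assumes R: "sfield R" and mu: "minpoly R \<alpha> \<mu>" and h: "Rpoly R h"
  shows "Rpoly R (h mod \<mu>)" "degree (h mod \<mu>) < degree \<mu>" "poly (h mod \<mu>) \<alpha> = poly h \<alpha>"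
proof -
  have mR: "Rpoly R \<mu>" "\<mu> \<noteq> 0" "poly \<mu> \<alpha> = 0" using mu unfolding minpoly_def by blast+
  show "Rpoly R (h mod \<mu>)" using Rpoly_divmod[OF R h mR(1)] by blast
  show "degree (h mod \<mu>) < degree \<mu>"
    using degree_mod_less[OF mR(2), of h] minpoly_deg_pos[OF mu] by auto
  have "h = (h div \<mu>) * \<mu> + h mod \<mu>" by simp
  then have "poly h \<alpha> = poly (h div \<mu>) \<alpha> * poly \<mu> \<alpha> + poly (h mod \<mu>) \<alpha>"
    by (metis poly_add poly_mult)
  then show "poly (h mod \<mu>) \<alpha> = poly h \<alpha>" using mR(3) by simp
qed

lemma minpoly_inv_aux:
  assumes R: "sfield R" and mu: "minpoly R \<alpha> \<mu>"
  shows "Rpoly R u \<Longrightarrow> poly u \<alpha> \<noteq> 0 \<Longrightarrow> degree u < degree \<mu> \<Longrightarrow>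
    \<exists>v. Rpoly R v \<and> poly u \<alpha> * poly v \<alpha> = 1"
proof (induction "degree u" arbitrary: u rule: less_induct)
  case less
  have mR: "Rpoly R \<mu>" "\<mu> \<noteq> 0" "poly \<mu> \<alpha> = 0" using mu unfolding minpoly_def by blast+
  have mmin: "degree \<mu> \<le> degree q" if "Rpoly R q" "q \<noteq> 0" "poly q \<alpha> = 0" for q
    using mu that unfolding minpoly_def by blast
  show ?case
  proof (cases "degree u = 0")
    case True
    then obtain c where uc: "u = [:c:]" by (metis degree_eq_zeroE)
    then have c: "c \<in> R" "c \<noteq> 0" using less.prems(1,2) Rpoly_coeff[of R u 0] by auto
    have "Rpoly R [:inverse c:]" using Rpoly_const[OF R sfieldD(6)[OF R c(1)]] .
    moreover have "poly u \<alpha> * poly [:inverse c:] \<alpha> = 1" using uc c by simp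
    ultimately show ?thesis by blast
  next
    case False
    have u0: "u \<noteq> 0" using less.prems(2) by auto
    define q where "q = \<mu> div u"
    define r where "r = \<mu> mod u"
    have qR: "Rpoly R q" "Rpoly R r" unfolding q_def r_def using Rpoly_divmod[OF R mR(1) less.prems(1)] by blast+
    have eq: "\<mu> = q * u + r" unfolding q_def r_def by simp
    have peq: "poly \<mu> \<alpha> = poly q \<alpha> * poly u \<alpha> + poly r \<alpha>"
      using eq by (metis poly_add poly_mult)
    have r0: "r \<noteq> 0"
    proof
      assume "r = 0"
      then have "poly q \<alpha> = 0" using peq mR(3) less.prems(2) by simp
      moreover have "q \<noteq> 0" using eq \<open>r = 0\<close> mR(2) by auto
      moreover have "degree \<mu> = degree q + degree u" using eq \<open>r = 0\<close> \<open>q \<noteq> 0\<close> u0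
        by (simp add: degree_mult_eq)
      ultimately show False using mmin[OF qR(1)] False by simp
    qed
    have dr: "degree r < degree u" unfolding r_def using degree_mod_less'[OF u0] r0 r_def by blast
    have pr: "poly r \<alpha> \<noteq> 0"
    proof
      assume "poly r \<alpha> = 0"
      then have "degree \<mu> \<le> degree r" using mmin[OF qR(2) r0] by blast
      then show False using dr less.prems(3) by simp
    qed
    obtain v where v: "Rpoly R v" "poly r \<alpha> * poly v \<alpha> = 1"
      using less.hyps[OF dr qR(2) pr] dr less.prems(3) by auto
    have "poly r \<alpha> = - (poly q \<alpha> * poly u \<alpha>)" using peq mR(3) by (simp add: eq_neg_iff_add_eq_0 add.commute)
    then have "poly u \<alpha> * poly (- (q * v)) \<alpha> = 1" using v(2) by (simp add: algebra_simps)
    moreover have "Rpoly R (- (q * v))" using Rpoly_uminus[OF R Rpoly_mult[OF R qR(1) v(1)]] .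
    ultimately show ?thesis by blast
  qed
qed

lemma minpoly_ext_sfield:
  assumes R: "sfield R" and mu: "minpoly R \<alpha> \<mu>"
  shows "sfield {poly h \<alpha> |h. Rpoly R h}" (is "sfield ?S")
    and "R \<subseteq> {poly h \<alpha> |h. Rpoly R h}" and "\<alpha> \<in> {poly h \<alpha> |h. Rpoly R h}"
proof -
  have mem: "v \<in> ?S" if "Rpoly R h" "v = poly h \<alpha>" for h v using that by blast
  show "R \<subseteq> ?S"
  proof
    fix c assume "c \<in> R"
    then show "c \<in> ?S" using mem[OF Rpoly_const[OF R \<open>c \<in> R\<close>]] by simp
  qed
  show "\<alpha> \<in> ?S" using mem[OF Rpoly_monom[OF R sfieldD(2)[OF R], of 1]] by (simp add: poly_monom)
  show "sfield ?S"
    unfolding sfield_def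
  proof (intro conjI ballI)
    show "0 \<in> ?S" using mem[OF Rpoly_0[OF R]] by simp
    show "1 \<in> ?S" using mem[OF Rpoly_1[OF R]] by simp
    fix x assume "x \<in> ?S"
    then obtain h where h: "Rpoly R h" "x = poly h \<alpha>" by blast
    show "- x \<in> ?S" using mem[OF Rpoly_uminus[OF R h(1)]] h(2) by simp
    show "inverse x \<in> ?S"
    proof (cases "x = 0")
      case True
      then show ?thesis using mem[OF Rpoly_0[OF R]] by simp
    next
      case False
      have "poly (h mod \<mu>) \<alpha> \<noteq> 0" using minpoly_reduce(3)[OF R mu h(1)] h(2) False by simp
      then obtain v where v: "Rpoly R v" "poly (h mod \<mu>) \<alpha> * poly v \<alpha> = 1"
        using minpoly_inv_aux[OF R mu minpoly_reduce(1)[OF R mu h(1)] _ minpoly_reduce(2)[OF R mu h(1)]] by blast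
      then have "x * poly v \<alpha> = 1" using minpoly_reduce(3)[OF R mu h(1)] h(2) by simp
      then have "inverse x = poly v \<alpha>" by (metis inverse_unique)
      then show ?thesis using mem[OF v(1)] by simp
    qed
    fix y assume "y \<in> ?S"
    then obtain k where k: "Rpoly R k" "y = poly k \<alpha>" by blast
    show "x + y \<in> ?S" using mem[OF Rpoly_add[OF R h(1) k(1)]] h(2) k(2) by simp
    show "x * y \<in> ?S" using mem[OF Rpoly_mult[OF R h(1) k(1)]] h(2) k(2) by simp
  qed
qed

inductive_set psos :: "'c::field set \<Rightarrow> nat \<Rightarrow> 'c poly set" for R m where
  psos0: "0 \<in> psos R m"
| psosS: "Rpoly R r \<Longrightarrow> degree r < m \<Longrightarrow> G \<in> psos R m \<Longrightarrow> r * r + G \<in> psos R m"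

lemma sos_ext_form:
  assumes "z \<in> sos {poly h \<alpha> |h. Rpoly R h}" and R: "sfield R" and mu: "minpoly R \<alpha> \<mu>"
  shows "\<exists>G\<in>psos R (degree \<mu>). z = poly G \<alpha>"
  using assms(1)
proof (induction rule: sos.induct)
  case sos0
  then show ?case using psos.psos0 by force
next
  case (sosS a s)
  then obtain h where h: "Rpoly R h" "a = poly h \<alpha>" by blast
  from sosS obtain G where G: "G \<in> psos R (degree \<mu>)" "s = poly G \<alpha>" by blast
  define r where "r = h mod \<mu>"
  have r: "Rpoly R r" "degree r < degree \<mu>" "poly r \<alpha> = a"
    unfolding r_def using minpoly_reduce[OF R mu h(1)] h(2) by auto
  have "r * r + G \<in> psos R (degree \<mu>)" using psos.psosS[OF r(1,2) G(1)] .
  moreover have "a * a + s = poly (r * r + G) \<alpha>" using r(3) G(2) by simp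
  ultimately show ?case by blast
qed

lemma psos_props:
  assumes "G \<in> psos R m" and R: "sfield R" "realset R" and m: "0 < m"
  shows "Rpoly R (1 + G) \<and> 1 + G \<noteq> 0 \<and> even (degree (1 + G)) \<and> degree (1 + G) \<le> 2 * (m - 1)
    \<and> lead_coeff (1 + G) \<in> sos R \<and> (\<forall>\<beta>\<in>R. poly G \<beta> \<in> sos R)"
  using assms(1)
proof (induction rule: psos.induct)
  case psos0
  then show ?case using Rpoly_1[OF R(1)] sos_one[OF R(1)] sos.sos0[of R] by simp
next
  case (psosS r G)
  define F where "F = 1 + G"
  have IH: "Rpoly R F" "F \<noteq> 0" "even (degree F)" "degree F \<le> 2 * (m - 1)" "lead_coeff F \<in> sos R"
    "\<forall>\<beta>\<in>R. poly G \<beta> \<in> sos R"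
    using psosS.IH unfolding F_def by blast+
  have eqF: "1 + (r * r + G) = r * r + F" unfolding F_def by (simp add: algebra_simps)
  have polyG: "\<forall>\<beta>\<in>R. poly (r * r + G) \<beta> \<in> sos R"
  proof
    fix \<beta> assume "\<beta> \<in> R"
    have "poly r \<beta> \<in> R" using Rpoly_poly[OF R(1) psosS.hyps(1) \<open>\<beta> \<in> R\<close>] .
    then show "poly (r * r + G) \<beta> \<in> sos R"
      using sos.sosS[OF _ bspec[OF IH(6) \<open>\<beta> \<in> R\<close>]] by simp
  qed
  have RF': "Rpoly R (r * r + F)"
    using Rpoly_add[OF R(1) Rpoly_mult[OF R(1) psosS.hyps(1) psosS.hyps(1)] IH(1)] .
  show ?case
  proof (cases "r = 0")
    case True
    then show ?thesis using IH polyG unfolding F_def by simp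
  next
    case r0: False
    define d where "d = degree r"
    have drr: "degree (r * r) = 2 * d" unfolding d_def using r0 by (simp add: degree_mult_eq)
    have lrr: "lead_coeff (r * r) = lead_coeff r * lead_coeff r" by (simp add: lead_coeff_mult)
    have lrR: "lead_coeff r \<in> R" using Rpoly_coeff[OF psosS.hyps(1)] .
    have lrr_sos: "lead_coeff (r * r) \<in> sos R" using lrr sos_sq[OF lrR] by simp
    have lrr0: "lead_coeff (r * r) \<noteq> 0" using r0 lrr by simp
    have dle: "2 * d \<le> 2 * (m - 1)" using psosS.hyps(2) unfolding d_def by simp
    have main: "r * r + F \<noteq> 0 \<and> even (degree (r * r + F)) \<and> degree (r * r + F) \<le> 2 * (m - 1)
      \<and> lead_coeff (r * r + F) \<in> sos R"
    proof (cases "2 * d < degree F")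
      case True
      then have dg: "degree (r * r + F) = degree F" using drr by (simp add: degree_add_eq_right)
      have "coeff (r * r) (degree F) = 0" using True drr by (simp add: coeff_eq_0)
      then have "lead_coeff (r * r + F) = lead_coeff F" using dg by simp
      then show ?thesis using dg IH True by (metis leading_coeff_0_iff)
    next
      case False
      show ?thesis
      proof (cases "degree F < 2 * d")
        case True
        then have dg: "degree (r * r + F) = 2 * d" using drr by (simp add: degree_add_eq_left)
        have "coeff F (2 * d) = 0" using True by (simp add: coeff_eq_0)
        then have "lead_coeff (r * r + F) = lead_coeff (r * r)" using dg drr by simp
        then show ?thesis using dg lrr_sos lrr0 dle by (metis leading_coeff_0_iff even_mult_iff even_numeral)
      next
        case False2: False
        then have eqd: "degree F = 2 * d" using False by simp
        have c: "coeff (r * r + F) (2 * d) = lead_coeff (r * r) + lead_coeff F" using eqd drr by simp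
        have cne: "coeff (r * r + F) (2 * d) \<noteq> 0"
          using c sos_pos[OF R lrr_sos lrr0 IH(5)] by simp
        have "degree (r * r + F) \<le> 2 * d" using drr eqd by (intro degree_add_le) auto
        moreover have "2 * d \<le> degree (r * r + F)" using le_degree[OF cne] .
        ultimately have dg: "degree (r * r + F) = 2 * d" by simp
        have "lead_coeff (r * r + F) \<in> sos R" using dg c sos_add[OF lrr_sos IH(5)] by simp
        moreover have "r * r + F \<noteq> 0"
        proof
          assume "r * r + F = 0"
          then show False using cne by simp
        qed
        ultimately show ?thesis using dg dle by simp
      qed
    qed
    show ?thesis unfolding eqF using main RF' polyG by blast
  qed
qed

lemma maxreal_odd:
  fixes R :: "'c::alg_closed_field set"
  assumes M: "maxreal K0 R"
  shows "Rpoly R p \<Longrightarrow> odd (degree p) \<Longrightarrow> \<exists>x\<in>R. poly p x = 0"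
proof (induction "degree p" arbitrary: p rule: less_induct)
  case less
  note R = maxreal_props[OF M]
  have p0: "p \<noteq> 0" using less.prems(2) by auto
  have "0 < degree p" using less.prems(2) by (cases "degree p") auto
  then obtain \<alpha> where \<alpha>: "poly p \<alpha> = 0" using alg_closed_imp_poly_has_root by blast
  show ?case
  proof (cases "\<alpha> \<in> R")
    case True
    then show ?thesis using \<alpha> by blast
  next
    case aR: False
    obtain \<mu> where mu: "minpoly R \<alpha> \<mu>" using minpoly_exists[OF less.prems(1) p0 \<alpha>] by blast
    have mR: "Rpoly R \<mu>" "\<mu> \<noteq> 0" "poly \<mu> \<alpha> = 0" using mu unfolding minpoly_def by blast+
    define m where "m = degree \<mu>"
    have m0: "0 < m" unfolding m_def using minpoly_deg_pos[OF mu] .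
    define s where "s = p div \<mu>"
    have ps: "p = s * \<mu>" "Rpoly R s" unfolding s_def using minpoly_dvd[OF R(1) mu less.prems(1) \<alpha>] by blast+
    have s0: "s \<noteq> 0" using ps(1) p0 by auto
    have dps: "degree p = degree s + m" unfolding m_def using ps(1) s0 mR(2) by (simp add: degree_mult_eq)
    show ?thesis
    proof (cases "even m")
      case True
      then have "odd (degree s)" using less.prems(2) dps by simp
      moreover have "degree s < degree p" using dps m0 by simp
      ultimately obtain x where "x \<in> R" "poly s x = 0" using less.hyps ps(2) by blast
      then show ?thesis using ps(1) by (intro bexI[of _ x]) simp_all
    next
      case modd: False
      show ?thesis
      proof (cases "m < degree p")
        case True
        then obtain x where "x \<in> R" "poly \<mu> x = 0" using less.hyps[of \<mu>] mR(1) modd unfolding m_def by blast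
        then show ?thesis using ps(1) by (intro bexI[of _ x]) simp_all
      next
        case False
        then have mp: "m = degree p" using dps by simp
        define S where "S = {poly h \<alpha> |h. Rpoly R h}"
        have S: "sfield S" "R \<subseteq> S" "\<alpha> \<in> S" unfolding S_def using minpoly_ext_sfield[OF R(1) mu] by blast+
        have "S \<noteq> R" using S(3) aR by blast
        then have "- 1 \<in> sos S" using maxreal_ext[OF M S(1,2)] by blast
        then obtain G where G: "G \<in> psos R m" "- 1 = poly G \<alpha>"
          using sos_ext_form[OF _ R(1) mu] unfolding S_def m_def by blast
        define F where "F = 1 + G"
        have FP: "Rpoly R F" "F \<noteq> 0" "even (degree F)" "degree F \<le> 2 * (m - 1)"
          "\<forall>\<beta>\<in>R. poly G \<beta> \<in> sos R"
          using psos_props[OF G(1) R(1,2) m0] unfolding F_def by blast+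
        have "poly F \<alpha> = 0" unfolding F_def using G(2) neg_eq_iff_add_eq_0[of 1 "poly G \<alpha>"] by simp
        define q where "q = F div \<mu>"
        have Fq: "F = q * \<mu>" "Rpoly R q" unfolding q_def using minpoly_dvd[OF R(1) mu FP(1) \<open>poly F \<alpha> = 0\<close>] by blast+
        have q0: "q \<noteq> 0" using Fq(1) FP(2) by auto
        have dF: "degree F = degree q + m" unfolding m_def using Fq(1) q0 mR(2) by (simp add: degree_mult_eq)
        have "odd (degree q)" using dF FP(3) modd by simp
        moreover have "degree q < degree p" using dF FP(4) mp m0 by simp
        ultimately obtain \<beta> where \<beta>: "\<beta> \<in> R" "poly q \<beta> = 0" using less.hyps Fq(2) by blast
        then have "poly F \<beta> = 0" using Fq(1) by simp
        then have "- 1 = poly G \<beta>" unfolding F_def using neg_eq_iff_add_eq_0[of 1 "poly G \<beta>"] by simp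
        then have "- 1 \<in> sos R" using FP(5) \<beta>(1) by simp
        then show ?thesis using R(2) unfolding realset_def by simp
      qed
    qed
  qed
qed

definition subrec :: "'c::field set \<Rightarrow> 'c ring" where
  "subrec R = (ring_of_type_algebra :: 'c ring)\<lparr>carrier := R\<rparr>"

lemma subrec_simps [simp]:
  "carrier (subrec R) = R" "monoid.mult (subrec R) = (*)" "one (subrec R) = 1"
  "zero (subrec R) = 0" "add (subrec R) = (+)"
  unfolding subrec_def ring_of_type_algebra_def by auto

lemma field_subrec:
  assumes R: "sfield R"
  shows "field (subrec R)"
proof -
  note D = sfieldD[OF R]
  show ?thesis
    apply (unfold_locales)
    apply (simp_all add: Units_def D algebra_simps)
    subgoal
    proof
      fix y assume "y \<in> R"
      then show "y \<in> {y \<in> R. \<exists>x\<in>R. y + x = 0}" using D(5)[of y] by force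
    qed
    subgoal
    proof (intro equalityI subsetI)
      fix y assume "y \<in> {y \<in> R. \<exists>x\<in>R. y * x = 1}"
      then show "y \<in> R - {0}" by auto
    next
      fix y assume y: "y \<in> R - {0}"
      then have "y * inverse y = 1" "inverse y \<in> R" using D(6)[of y] by auto
      then show "y \<in> {y \<in> R. \<exists>x\<in>R. y * x = 1}" using y by blast
    qed
    done
qed


lemma image_ring_ops:
  "carrier (image_ring f S) = f ` carrier S"
  "monoid.mult (image_ring f S) a b = f (inv_into (carrier S) f a \<otimes>\<^bsub>S\<^esub> inv_into (carrier S) f b)"
  "one (image_ring f S) = f \<one>\<^bsub>S\<^esub>"
  "zero (image_ring f S) = f \<zero>\<^bsub>S\<^esub>"
  "add (image_ring f S) a b = f (inv_into (carrier S) f a \<oplus>\<^bsub>S\<^esub> inv_into (carrier S) f b)"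
  by (simp_all add: image_ring_def image_group_def monoid.defs)

locale transp =
  fixes R :: "'c::field set" and g :: "'c \<Rightarrow> 'r"
  assumes R: "sfield R" and g: "inj g"
begin

definition T :: "'r ring" where "T = image_ring g (subrec R)"

lemma T_field: "field T"
  unfolding T_def using field.inj_imp_image_ring_is_field[OF field_subrec[OF R], of g] g
  by (metis inj_on_subset subset_UNIV)

lemma hg: "x \<in> R \<Longrightarrow> inv_into R g (g x) = x"
  using g by (simp add: inv_into_f_f inj_on_subset)

lemma T_carrier: "carrier T = g ` R" unfolding T_def by (simp add: image_ring_ops)
lemma T_mult: "x \<in> R \<Longrightarrow> y \<in> R \<Longrightarrow> g x \<otimes>\<^bsub>T\<^esub> g y = g (x * y)"
  unfolding T_def by (simp add: image_ring_ops hg)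
lemma T_add: "x \<in> R \<Longrightarrow> y \<in> R \<Longrightarrow> g x \<oplus>\<^bsub>T\<^esub> g y = g (x + y)"
  unfolding T_def by (simp add: image_ring_ops hg)
lemma T_one: "\<one>\<^bsub>T\<^esub> = g 1" unfolding T_def by (simp add: image_ring_ops)
lemma T_zero: "\<zero>\<^bsub>T\<^esub> = g 0" unfolding T_def by (simp add: image_ring_ops)

lemma T_uminus: assumes "x \<in> R" shows "\<ominus>\<^bsub>T\<^esub> g x = g (- x)"
proof -
  interpret field T using T_field .
  have "g (- x) \<oplus>\<^bsub>T\<^esub> g x = \<zero>\<^bsub>T\<^esub>" using T_add[OF sfieldD(5)[OF R assms] assms] T_zero by simp
  moreover have "g x \<in> carrier T" "g (- x) \<in> carrier T" using assms sfieldD(5)[OF R assms] T_carrier by auto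
  ultimately show ?thesis using minus_equality by blast
qed

lemma T_pow: assumes "x \<in> R" shows "g x [^]\<^bsub>T\<^esub> (n::nat) = g (x ^ n)"
proof (induction n)
  case 0
  then show ?case using T_one by simp
next
  case (Suc n)
  then show ?case using T_mult[OF sfield_power[OF R assms] assms] by (simp add: mult.commute)
qed

lemma T_finsum:
  assumes "finite A" "\<And>i. i \<in> A \<Longrightarrow> F i \<in> R" "\<And>i. i \<in> A \<Longrightarrow> \<phi> i = g (F i)"
  shows "finsum T \<phi> A = g (sum F A)"
  using assms
proof (induction A rule: finite_induct)
  case empty
  interpret field T using T_field .
  show ?case using T_zero by simp
next
  case (insert a A)
  interpret field T using T_field .
  have car: "\<phi> \<in> A \<rightarrow> carrier T" "\<phi> a \<in> carrier T" using insert.prems T_carrier by auto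
  have "finsum T \<phi> (insert a A) = \<phi> a \<oplus>\<^bsub>T\<^esub> finsum T \<phi> A"
    using finsum_insert[OF insert.hyps(1,2) car] .
  also have "\<dots> = g (F a) \<oplus>\<^bsub>T\<^esub> g (sum F A)" using insert by simp
  also have "\<dots> = g (F a + sum F A)"
    using T_add[OF insert.prems(1)[of a] sfield_sum[OF R, of A F]] insert.prems(1) by simp
  finally show ?case using insert.hyps by simp
qed

end

context includes cardinal_syntax
begin

lemma finite_le_infinite: "finite A \<Longrightarrow> \<not> finite B \<Longrightarrow> |A| \<le>o |B|"
  using finite_ordLess_infinite[of "|A|" "|B|"] card_of_Well_order Field_card_of ordLess_imp_ordLeq
  by metis

lemma lists_len_le:
  fixes B :: "'b set"
  assumes inf: "\<not> finite B" and le: "|UNIV :: 'a set| \<le>o |B|"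
  shows "|{xs :: 'a list. length xs = n}| \<le>o |B|"
proof (induction n)
  case 0
  have "{xs :: 'a list. length xs = 0} = {[]}" by auto
  moreover have "|{[] :: 'a list}| \<le>o |B|" by (rule finite_le_infinite[OF _ inf]) simp
  ultimately show ?case by simp
next
  case (Suc n)
  have eq: "{xs :: 'a list. length xs = Suc n} = (\<lambda>(x, xs). x # xs) ` ((UNIV :: 'a set) \<times> {xs. length xs = n})"
  proof (intro equalityI subsetI)
    fix xs :: "'a list" assume "xs \<in> {xs. length xs = Suc n}"
    then obtain y ys where "xs = y # ys" "length ys = n" by (cases xs) auto
    then show "xs \<in> (\<lambda>(x, xs). x # xs) ` ((UNIV :: 'a set) \<times> {xs. length xs = n})" by force
  qed auto
  have "|(UNIV :: 'a set) \<times> {xs :: 'a list. length xs = n}| \<le>o |B|"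
    using card_of_Sigma_ordLeq_infinite[OF inf le, of "\<lambda>_. {xs :: 'a list. length xs = n}"] Suc by simp
  then show ?case unfolding eq using card_of_image ordLeq_transitive by blast
qed

lemma lists_le:
  fixes B :: "'b set"
  assumes inf: "\<not> finite B" and le: "|UNIV :: 'a set| \<le>o |B|"
  shows "|UNIV :: 'a list set| \<le>o |B|"
proof -
  have "(UNIV :: 'a list set) = (\<Union>n. {xs. length xs = n})" by auto
  moreover have "|\<Union>n. {xs :: 'a list. length xs = n}| \<le>o |B|"
    using card_of_UNION_ordLeq_infinite[OF inf infinite_iff_card_of_nat[THEN iffD1, OF inf], of "\<lambda>n. {xs :: 'a list. length xs = n}"]
      lists_len_le[OF inf le] by blast
  ultimately show ?thesis by simp
qed

lemma exists_embedding:
  "\<exists>g :: 'a::{real_algebra_1, idom} fract alg_closure \<Rightarrow> 'a. inj g"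
proof -
  have inf: "\<not> finite (UNIV :: 'a set)" using infinite_UNIV_char_0 by blast
  have "(UNIV :: 'a fract set) = (\<lambda>(a, b). Fract a b) ` ((UNIV :: 'a set) \<times> (UNIV :: 'a set))"
  proof (intro equalityI subsetI)
    fix q :: "'a fract"
    obtain a b where "q = Fract a b" by (cases q) auto
    then show "q \<in> (\<lambda>(a, b). Fract a b) ` ((UNIV :: 'a set) \<times> (UNIV :: 'a set))" by force
  qed auto
  then have a1: "|UNIV :: 'a fract set| \<le>o |(UNIV :: 'a set) \<times> (UNIV :: 'a set)|"
    using card_of_image[of "\<lambda>(a, b). Fract a b" "(UNIV :: 'a set) \<times> (UNIV :: 'a set)"] by (simp only:)
  have a2: "|(UNIV :: 'a set) \<times> (UNIV :: 'a set)| \<le>o |UNIV :: 'a set|"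
    using ordIso_imp_ordLeq[OF card_of_Times_same_infinite[OF inf]] .
  have fr: "|UNIV :: 'a fract set| \<le>o |UNIV :: 'a set|" using ordLeq_transitive[OF a1 a2] .
  have pe: "(UNIV :: 'a fract poly set) = Poly ` UNIV" by (metis Poly_coeffs surj_def)
  have "|Poly ` (UNIV :: 'a fract list set)| \<le>o |UNIV :: 'a set|"
    using ordLeq_transitive[OF card_of_image[of Poly "UNIV :: 'a fract list set"] lists_le[OF inf fr]] .
  then have po: "|UNIV :: 'a fract poly set| \<le>o |UNIV :: 'a set|" by (simp only: pe[symmetric])
  define Z where "Z p = {x :: 'a fract alg_closure. poly (map_poly to_ac p) x = 0}" for p
  have sub: "(UNIV :: 'a fract alg_closure set) \<subseteq> (\<Union>p\<in>{p. p \<noteq> 0}. Z p)"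
  proof
    fix x :: "'a fract alg_closure"
    obtain p where "p \<noteq> 0" "poly (map_poly to_ac p) x = 0" using alg_closure_algebraic by blast
    then show "x \<in> (\<Union>p\<in>{p. p \<noteq> 0}. Z p)" unfolding Z_def by blast
  qed
  have un: "|\<Union>p\<in>{p :: 'a fract poly. p \<noteq> 0}. Z p| \<le>o |UNIV :: 'a set|"
  proof (rule card_of_UNION_ordLeq_infinite[OF inf])
    show "|{p :: 'a fract poly. p \<noteq> 0}| \<le>o |UNIV :: 'a set|"
      using ordLeq_transitive[OF card_of_mono1[of "{p :: 'a fract poly. p \<noteq> 0}" UNIV] po] by simp
    show "\<forall>p\<in>{p. p \<noteq> 0}. |Z p| \<le>o |UNIV :: 'a set|"
    proof
      fix p :: "'a fract poly" assume "p \<in> {p. p \<noteq> 0}"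
      then have "map_poly to_ac p \<noteq> 0" by (subst map_poly_eq_0_iff) auto
      then have "finite (Z p)" unfolding Z_def using poly_roots_finite by blast
      then show "|Z p| \<le>o |UNIV :: 'a set|" using finite_le_infinite[OF _ inf] by blast
    qed
  qed
  have "|UNIV :: 'a fract alg_closure set| \<le>o |UNIV :: 'a set|"
    using ordLeq_transitive[OF card_of_mono1[OF sub] un] .
  from card_of_ordLeq[THEN iffD2, OF this] obtain g :: "'a fract alg_closure \<Rightarrow> 'a" where "inj_on g UNIV" by blast
  then show ?thesis by blast
qed

end

lemma rcf_T:
  fixes R :: "'c::alg_closed_field set" and g :: "'c \<Rightarrow> 'r"
  assumes M: "maxreal K0 R" and g: "inj g"
  shows "real_closed_field (transp.T R g)"
proof -
  note RR = maxreal_props[OF M]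
  interpret transp R g using RR(1) g by unfold_locales
  interpret TF: field "transp.T R g" using T_field .
  have carT: "u \<in> carrier (transp.T R g) \<Longrightarrow> inv_into R g u \<in> R \<and> u = g (inv_into R g u)" for u
    using T_carrier hg by auto
  show ?thesis
    unfolding real_closed_field_def real_field_def
  proof (intro conjI)
    show "field (transp.T R g)" using T_field .
    show "\<not> (\<exists>(n::nat) f. f ` {..<n} \<subseteq> carrier (transp.T R g) \<and>
          finsum (transp.T R g) (\<lambda>i. f i \<otimes>\<^bsub>transp.T R g\<^esub> f i) {..<n} = \<ominus>\<^bsub>transp.T R g\<^esub> \<one>\<^bsub>transp.T R g\<^esub>)"
    proof
      assume "\<exists>(n::nat) f. f ` {..<n} \<subseteq> carrier (transp.T R g) \<and>
          finsum (transp.T R g) (\<lambda>i. f i \<otimes>\<^bsub>transp.T R g\<^esub> f i) {..<n} = \<ominus>\<^bsub>transp.T R g\<^esub> \<one>\<^bsub>transp.T R g\<^esub>"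
      then obtain n :: nat and f where f: "f ` {..<n} \<subseteq> carrier (transp.T R g)"
        "finsum (transp.T R g) (\<lambda>i. f i \<otimes>\<^bsub>transp.T R g\<^esub> f i) {..<n} = \<ominus>\<^bsub>transp.T R g\<^esub> \<one>\<^bsub>transp.T R g\<^esub>" by blast
      define F where "F i = inv_into R g (f i)" for i
      have F: "F i \<in> R" "f i = g (F i)" if "i < n" for i
        using carT[of "f i"] f(1) that unfolding F_def by auto
      have "finsum (transp.T R g) (\<lambda>i. f i \<otimes>\<^bsub>transp.T R g\<^esub> f i) {..<n} = g (\<Sum>i<n. F i * F i)"
        by (rule T_finsum) (simp_all add: F T_mult sfieldD(4)[OF RR(1)])
      moreover have "\<ominus>\<^bsub>transp.T R g\<^esub> \<one>\<^bsub>transp.T R g\<^esub> = g (- 1)" using T_one T_uminus[OF sfieldD(2)[OF RR(1)]] by simp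
      ultimately have "(\<Sum>i<n. F i * F i) = - 1" using f(2) g by (simp add: inj_eq)
      moreover have "(\<Sum>i<n. F i * F i) \<in> sos R" using sos_sum_eq[OF RR(1)] F(1) by blast
      ultimately show False using RR(2) unfolding realset_def by simp
    qed
    show "\<forall>a\<in>carrier (transp.T R g). \<exists>b\<in>carrier (transp.T R g). a = b \<otimes>\<^bsub>transp.T R g\<^esub> b \<or> \<ominus>\<^bsub>transp.T R g\<^esub> a = b \<otimes>\<^bsub>transp.T R g\<^esub> b"
    proof
      fix a assume "a \<in> carrier (transp.T R g)"
      then obtain x where x: "x \<in> R" "a = g x" using T_carrier by auto
      obtain b where b: "b \<in> R" "x = b * b \<or> - x = b * b" using maxreal_square[OF M x(1)] by blast
      have "g b \<in> carrier (transp.T R g)" using b T_carrier by auto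
      moreover have "a = g b \<otimes>\<^bsub>transp.T R g\<^esub> g b \<or> \<ominus>\<^bsub>transp.T R g\<^esub> a = g b \<otimes>\<^bsub>transp.T R g\<^esub> g b"
        using b x T_mult[OF b(1) b(1)] T_uminus[OF x(1)] by auto
      ultimately show "\<exists>b\<in>carrier (transp.T R g). a = b \<otimes>\<^bsub>transp.T R g\<^esub> b \<or> \<ominus>\<^bsub>transp.T R g\<^esub> a = b \<otimes>\<^bsub>transp.T R g\<^esub> b" by blast
    qed
    show "\<forall>(n::nat) c. odd n \<longrightarrow> c ` {..n} \<subseteq> carrier (transp.T R g) \<longrightarrow> c n \<noteq> \<zero>\<^bsub>transp.T R g\<^esub> \<longrightarrow>
        (\<exists>x\<in>carrier (transp.T R g). finsum (transp.T R g) (\<lambda>i. c i \<otimes>\<^bsub>transp.T R g\<^esub> x [^]\<^bsub>transp.T R g\<^esub> i) {..n} = \<zero>\<^bsub>transp.T R g\<^esub>)"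
    proof (intro allI impI)
      fix n :: nat and c assume n: "odd n" and c: "c ` {..n} \<subseteq> carrier (transp.T R g)" and cn: "c n \<noteq> \<zero>\<^bsub>transp.T R g\<^esub>"
      define C where "C i = inv_into R g (c i)" for i
      have C: "C i \<in> R" "c i = g (C i)" if "i \<le> n" for i
        using carT[of "c i"] c that unfolding C_def by auto
      have Cn: "C n \<noteq> 0" using C(2)[of n] cn T_zero by auto
      define p where "p = (\<Sum>i\<le>n. monom (C i) i)"
      have cp: "coeff p k = (if k \<le> n then C k else 0)" for k
        unfolding p_def by (simp add: coeff_sum coeff_monom)
      have Rp: "Rpoly R p" unfolding Rpoly_def cp using C(1) sfieldD(1)[OF RR(1)] by simp
      have "degree p \<le> n" by (rule degree_le) (simp add: cp)
      moreover have "n \<le> degree p" by (rule le_degree) (simp add: cp Cn)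
      ultimately have dp: "degree p = n" by simp
      obtain x where x: "x \<in> R" "poly p x = 0" using maxreal_odd[OF M Rp] n dp by auto
      have pp: "poly p x = (\<Sum>i\<le>n. C i * x ^ i)" unfolding p_def by (simp add: poly_sum poly_monom)
      have "finsum (transp.T R g) (\<lambda>i. c i \<otimes>\<^bsub>transp.T R g\<^esub> g x [^]\<^bsub>transp.T R g\<^esub> i) {..n} = g (\<Sum>i\<le>n. C i * x ^ i)"
        by (rule T_finsum) (simp_all add: C T_pow[OF x(1)] T_mult sfieldD(4)[OF RR(1)] sfield_power[OF RR(1) x(1)])
      also have "\<dots> = \<zero>\<^bsub>transp.T R g\<^esub>" using pp x(2) T_zero by simp
      finally show "\<exists>x\<in>carrier (transp.T R g). finsum (transp.T R g) (\<lambda>i. c i \<otimes>\<^bsub>transp.T R g\<^esub> x [^]\<^bsub>transp.T R g\<^esub> i) {..n} = \<zero>\<^bsub>transp.T R g\<^esub>"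
        using x(1) T_carrier by blast
    qed
  qed
qed

lemma sos_to_ac:
  "s \<in> sos (range (to_ac :: 'k::field \<Rightarrow> 'k alg_closure)) \<Longrightarrow> \<exists>n f. s = to_ac (\<Sum>i<(n::nat). f i ^ 2)"
proof (induction rule: sos.induct)
  case sos0
  then show ?case by (intro exI[of _ 0]) simp
next
  case (sosS a s)
  then obtain b where b: "a = to_ac b" by blast
  from sosS obtain n f where s: "s = to_ac (\<Sum>i<(n::nat). f i ^ 2)" by blast
  define f' where "f' = f(n := b)"
  have "(\<Sum>i<Suc n. f' i ^ 2) = b ^ 2 + (\<Sum>i<n. f i ^ 2)"
    unfolding f'_def by (simp add: add.commute)
  then have "a * a + s = to_ac (\<Sum>i<Suc n. f' i ^ 2)" using b s by (simp add: power2_eq_square)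
  then show ?case by blast
qed

lemma base_real:
  assumes "real_field_type TYPE('k::field)"
  shows "sfield (range (to_ac :: 'k \<Rightarrow> 'k alg_closure))" "realset (range (to_ac :: 'k \<Rightarrow> 'k alg_closure))"
proof -
  show "sfield (range (to_ac :: 'k \<Rightarrow> 'k alg_closure))"
    unfolding sfield_def
  proof (intro conjI ballI)
    show "0 \<in> range (to_ac :: 'k \<Rightarrow> 'k alg_closure)" by (metis rangeI to_ac_0)
    show "1 \<in> range (to_ac :: 'k \<Rightarrow> 'k alg_closure)" by (metis rangeI to_ac_1)
    fix x assume "x \<in> range (to_ac :: 'k \<Rightarrow> 'k alg_closure)"
    then obtain a where a: "x = to_ac a" by blast
    show "- x \<in> range (to_ac :: 'k \<Rightarrow> 'k alg_closure)" using a by (metis rangeI to_ac_minus)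
    show "inverse x \<in> range (to_ac :: 'k \<Rightarrow> 'k alg_closure)" using a by (metis rangeI to_ac_inverse)
    fix y assume "y \<in> range (to_ac :: 'k \<Rightarrow> 'k alg_closure)"
    then obtain b where b: "y = to_ac b" by blast
    show "x + y \<in> range (to_ac :: 'k \<Rightarrow> 'k alg_closure)" using a b by (metis rangeI to_ac_add)
    show "x * y \<in> range (to_ac :: 'k \<Rightarrow> 'k alg_closure)" using a b by (metis rangeI to_ac_mult)
  qed
  show "realset (range (to_ac :: 'k \<Rightarrow> 'k alg_closure))"
    unfolding realset_def
  proof
    assume "- 1 \<in> sos (range (to_ac :: 'k \<Rightarrow> 'k alg_closure))"
    then obtain n and f :: "nat \<Rightarrow> 'k" where "- 1 = to_ac (\<Sum>i<(n::nat). f i ^ 2)" using sos_to_ac by blast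
    then have "to_ac (\<Sum>i<(n::nat). f i ^ 2) = to_ac (- 1 :: 'k)" by simp
    then have "(\<Sum>i<(n::nat). f i ^ 2) = - 1" by (simp only: to_ac_eq_iff)
    then show False using assms unfolding real_field_type_def by blast
  qed
qed

theorem proposition2p2:
  fixes \<iota> :: "'a::{real_algebra_1, idom} \<Rightarrow> 'b::comm_ring_1"
  assumes "real_field_type TYPE('a fract)"
    and "tc_ring_hom \<iota>"
    and "substitution_property TYPE('a) \<iota>"
  shows "inj \<iota>"
proof -
  define K0 where "K0 = range (to_ac :: 'a fract \<Rightarrow> 'a fract alg_closure)"
  have K0: "sfield K0" "realset K0" unfolding K0_def using base_real[OF assms(1)] by blast+
  obtain R where M: "maxreal K0 R" using exists_maximal_real[OF K0] unfolding maxreal_def by blast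
  note RR = maxreal_props[OF M]
  obtain g :: "'a fract alg_closure \<Rightarrow> 'a" where g: "inj g" using exists_embedding by blast
  interpret transp R g using RR(1) g by unfold_locales
  have rcf: "real_closed_field (transp.T R g)" using rcf_T[OF M g] .
  define \<phi> where "\<phi> a = g (to_ac (Fract a 1))" for a :: 'a
  have inR: "to_ac (Fract a 1) \<in> R" for a :: 'a using RR(3) unfolding K0_def by blast
  have hom: "ring_hom_into \<phi> (transp.T R g)"
    unfolding ring_hom_into_def
  proof (intro conjI allI)
    show "\<phi> x \<in> carrier (transp.T R g)" for x unfolding \<phi>_def using inR T_carrier by blast
    show "\<phi> 1 = \<one>\<^bsub>transp.T R g\<^esub>" unfolding \<phi>_def using T_one by (simp add: One_fract_def[symmetric])
    show "\<phi> (x + y) = \<phi> x \<oplus>\<^bsub>transp.T R g\<^esub> \<phi> y" for x y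
    proof -
      have "Fract (x + y) 1 = Fract x 1 + Fract y 1" by simp
      then have "to_ac (Fract (x + y) 1) = to_ac (Fract x 1) + to_ac (Fract y 1)" by (simp only: to_ac_add)
      then show ?thesis unfolding \<phi>_def using T_add[OF inR inR] by simp
    qed
    show "\<phi> (x * y) = \<phi> x \<otimes>\<^bsub>transp.T R g\<^esub> \<phi> y" for x y
    proof -
      have "Fract (x * y) 1 = Fract x 1 * Fract y 1" by simp
      then have "to_ac (Fract (x * y) 1) = to_ac (Fract x 1) * to_ac (Fract y 1)" by (simp only: to_ac_mult)
      then show ?thesis unfolding \<phi>_def using T_mult[OF inR inR] by simp
    qed
  qed
  obtain \<psi> where \<psi>: "ring_hom_into \<psi> (transp.T R g)" "\<psi> \<circ> \<iota> = \<phi>"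
    using assms(3) rcf hom unfolding substitution_property_def by blast
  show "inj \<iota>"
  proof (rule injI)
    fix a b assume "\<iota> a = \<iota> b"
    then have "\<phi> a = \<phi> b" using \<psi>(2) by (metis comp_apply)
    then have "Fract a 1 = Fract b 1" unfolding \<phi>_def using g by (simp add: inj_eq)
    then show "a = b" by (simp add: eq_fract)
  qed
qed

end
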